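(* Let $f:\mathbb{R}^n\to\mathbb{R}^n$ be continuously differentiable and $q:\mathbb{R}^n\to\mathbb{R}\cup\{+\infty\}$ proper, convex and lower semicontinuous. Let $\hat x\in\mathbb{R}^n$, $(\hat d,\hat d^* )\in\mathrm{gph}\,\partial q$, and let $G$ be a symmetric positive semidefinite $n\times n$ matrix with $\|G\|\le1$ such that $Gv^*\in D^*(\partial q)(\hat d,\hat d^* )((I-G)v^* )$ for all $v^*\in\mathbb{R}^n$. Assume that \[0\in\nabla f(\hat x)^Ts+D^*(\partial q)(\hat d,\hat d^* )(s)\ \Longrightarrow\ s=0.\] Then the matrix $(I-G)\nabla f(\hat x)+G$ is nonsingular and \[\|((I-G)\nabla f(\hat x)+G)^{-1}\|\le 1+\frac1\mu\|\nabla f(\hat x)-I\|,\qquad\text{where } \mu=\min_{\|s\|=1}\operatorname{dist}\bigl(0,\nabla f(\hat x)^Ts+D^*(\partial q)(\hat d,\hat d^* )(s)\bigr).\]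
   Context: $\partial q$ is the convex subdifferential, $\nabla f(\hat x)$ the Jacobian, norms are Euclidean/spectral. For a closed set $C$ and $\bar z\in C$: the regular normal cone $\widehat N_C(\bar z)$ is the polar of the tangent cone $T_C(\bar z)=\{w:\exists t_k\downarrow0,w_k\to w,\ \bar z+t_kw_k\in C\}$; the limiting normal cone $N_C(\bar z)$ consists of all limits of $z_k^*\in\widehat N_C(z_k)$ with $z_k\in C$, $z_k\to\bar z$. For a set-valued map $F$ with $(\bar x,\bar y)\in\mathrm{gph}\, F$, the limiting coderivative is $D^*F(\bar x,\bar y)(v^* )=\{u^*:(u^*,-v^* )\in N_{\mathrm{gph}\, F}(\bar x,\bar y)\}$. *)

theory Defs
  imports "HOL-Analysis.Analysis"
begin

text \<open>Extended-real valued functions q : R^n -> R \<union> {+\<infinity>}, modelled with ereal values.\<close>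

definition proper_fun :: "('a \<Rightarrow> ereal) \<Rightarrow> bool" where
  "proper_fun q \<longleftrightarrow> (\<forall>x. q x \<noteq> -\<infinity>) \<and> (\<exists>x. q x \<noteq> \<infinity>)"

text \<open>Convexity of an extended-real valued function: convex epigraph.\<close>
definition convex_fun :: "('a::real_vector \<Rightarrow> ereal) \<Rightarrow> bool" where
  "convex_fun q \<longleftrightarrow> convex {(x, t::real). q x \<le> ereal t}"

definition lsc_fun :: "('a::topological_space \<Rightarrow> ereal) \<Rightarrow> bool" where
  "lsc_fun q \<longleftrightarrow> (\<forall>x. q x \<le> Liminf (at x) q)"

text \<open>Convex subdifferential (empty outside the effective domain).\<close>
definition subdiff :: "('a::real_inner \<Rightarrow> ereal) \<Rightarrow> 'a \<Rightarrow> 'a set" where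
  "subdiff q x = {v. \<bar>q x\<bar> \<noteq> \<infinity> \<and> (\<forall>y. q x + ereal (v \<bullet> (y - x)) \<le> q y)}"

definition graph_of :: "('a \<Rightarrow> 'b set) \<Rightarrow> ('a \<times> 'b) set" where
  "graph_of F = {(x, y). y \<in> F x}"

definition tangent_cone :: "'a::real_normed_vector set \<Rightarrow> 'a \<Rightarrow> 'a set" where
  "tangent_cone C z = {w. \<exists>t ws. (\<forall>k. t k > (0::real)) \<and> t \<longlonglongrightarrow> 0 \<and> ws \<longlonglongrightarrow> w
        \<and> (\<forall>k. z + t k *\<^sub>R ws k \<in> C)}"

text \<open>Regular normal cone: polar of the tangent cone (only at points of C).\<close>
definition regular_normal_cone :: "'a::real_inner set \<Rightarrow> 'a \<Rightarrow> 'a set" where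
  "regular_normal_cone C z = {v. z \<in> C \<and> (\<forall>w\<in>tangent_cone C z. v \<bullet> w \<le> 0)}"

definition limiting_normal_cone :: "'a::real_inner set \<Rightarrow> 'a \<Rightarrow> 'a set" where
  "limiting_normal_cone C z = {v. z \<in> C \<and> (\<exists>zs vs. (\<forall>k. zs k \<in> C \<and> vs k \<in> regular_normal_cone C (zs k))
        \<and> zs \<longlonglongrightarrow> z \<and> vs \<longlonglongrightarrow> v)}"

text \<open>Limiting coderivative D*F(x,y)(v).\<close>
definition coderivative :: "('a::real_inner \<Rightarrow> 'b::real_inner set) \<Rightarrow> 'a \<Rightarrow> 'b \<Rightarrow> 'b \<Rightarrow> 'a set" where
  "coderivative F x y v = {u. (u, -v) \<in> limiting_normal_cone (graph_of F) (x, y)}"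

text \<open>Distance from 0 to a set, with the convention dist(0, {}) = +\<infinity>.\<close>
definition dist0 :: "'a::real_normed_vector set \<Rightarrow> ereal" where
  "dist0 S = (INF u\<in>S. ereal (norm u))"

end

theory Submission
  imports Defs
begin

lemma transpose_bound:
  fixes X :: "real^'n^'m"
  assumes "\<And>x. norm (X *v x) \<le> c * norm x"
  shows "norm (transpose X *v y) \<le> c * norm y"
proof -
  define z where "z = transpose X *v y"
  have "norm z ^ 2 = z \<bullet> z" by (simp add: power2_norm_eq_inner)
  also have "\<dots> = y \<bullet> (X *v z)"
    unfolding z_def transpose_matrix_vector by (simp add: dot_lmul_matrix inner_commute)
  also have "\<dots> \<le> norm y * norm (X *v z)" by (rule norm_cauchy_schwarz)
  also have "\<dots> \<le> norm y * (c * norm z)" by (simp add: assms mult_left_mono)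
  finally have h: "norm z * norm z \<le> (c * norm y) * norm z" by (simp add: power2_eq_square algebra_simps)
  show ?thesis
  proof (cases "z = 0")
    case True
    have "norm (X *v axis (undefined::'n) 1) \<le> c * norm (axis (undefined::'n) (1::real))" by (rule assms)
    then have "0 \<le> c" by (metis norm_axis_1 mult.right_neutral norm_ge_zero order_trans)
    then show ?thesis using True z_def by simp
  next
    case False
    then have "norm z > 0" by simp
    then show ?thesis using h z_def by simp
  qed
qed

lemma lnc_scale:
  assumes "v \<in> limiting_normal_cone C z" "(t::real) > 0"
  shows "t *\<^sub>R v \<in> limiting_normal_cone C z"
proof -
  from assms(1) obtain zs vs where h: "z \<in> C" "\<forall>k. zs k \<in> C \<and> vs k \<in> regular_normal_cone C (zs k)"
    "zs \<longlonglongrightarrow> z" "vs \<longlonglongrightarrow> v"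
    unfolding limiting_normal_cone_def by blast
  have "\<forall>k. zs k \<in> C \<and> t *\<^sub>R vs k \<in> regular_normal_cone C (zs k)"
    using h(2) assms(2) unfolding regular_normal_cone_def
    by (auto simp: mult_nonneg_nonpos)
  moreover have "(\<lambda>k. t *\<^sub>R vs k) \<longlonglongrightarrow> t *\<^sub>R v"
    using h(4) by (intro tendsto_intros)
  ultimately have "\<exists>zs' vs'. (\<forall>k. zs' k \<in> C \<and> vs' k \<in> regular_normal_cone C (zs' k))
        \<and> zs' \<longlonglongrightarrow> z \<and> vs' \<longlonglongrightarrow> t *\<^sub>R v"
    using h(3) by (intro exI[of _ zs] exI[of _ "\<lambda>k. t *\<^sub>R vs k"]) simp
  then show ?thesis using h(1) unfolding limiting_normal_cone_def by simp
qed

lemma cod_scale: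
  assumes "u \<in> coderivative F x y v" "(t::real) > 0"
  shows "t *\<^sub>R u \<in> coderivative F x y (t *\<^sub>R v)"
proof -
  have "(u, -v) \<in> limiting_normal_cone (graph_of F) (x, y)"
    using assms(1) unfolding coderivative_def by blast
  then have "t *\<^sub>R (u, -v) \<in> limiting_normal_cone (graph_of F) (x, y)"
    using assms(2) by (rule lnc_scale)
  moreover have "t *\<^sub>R (u, -v) = (t *\<^sub>R u, - (t *\<^sub>R v))" by simp
  ultimately show ?thesis unfolding coderivative_def by simp
qed

lemma inv_bound:
  fixes M :: "real^'n^'n"
  assumes inv: "invertible M" and K: "\<And>v. norm v \<le> K * norm (transpose M *v v)"
  shows "norm (matrix_inv M *v y) \<le> K * norm y"
proof -
  define B where "B = matrix_inv M"
  have BM: "M ** B = mat 1 \<and> B ** M = mat 1"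
    using inv unfolding invertible_def matrix_inv_def B_def by (rule someI_ex)
  define x where "x = B *v y"
  define u where "u = transpose B *v x"
  have Tu: "transpose M *v u = x"
    unfolding u_def matrix_vector_mul_assoc matrix_transpose_mul[symmetric] using BM by simp
  have "norm x ^ 2 = x \<bullet> (B *v y)" by (simp add: power2_norm_eq_inner x_def)
  also have "\<dots> = u \<bullet> y" unfolding u_def transpose_matrix_vector by (simp add: dot_lmul_matrix)
  also have "\<dots> \<le> norm u * norm y" by (rule norm_cauchy_schwarz)
  also have "\<dots> \<le> K * norm x * norm y" using K[of u] Tu by (simp add: mult_right_mono)
  finally have h: "norm x * norm x \<le> (K * norm y) * norm x" by (simp add: power2_eq_square algebra_simps)
  show ?thesis
  proof (cases "x = 0")
    case True
    have "norm (axis (undefined::'n) (1::real)) \<le> K * norm (transpose M *v axis (undefined::'n) 1)" by (rule K)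
    then have one: "1 \<le> K * norm (transpose M *v axis (undefined::'n) 1)" by (simp add: norm_axis_1)
    have "0 \<le> K"
    proof (rule ccontr)
      assume "\<not> 0 \<le> K"
      then have "K * norm (transpose M *v axis (undefined::'n) 1) \<le> 0"
        using mult_nonpos_nonneg[of K "norm (transpose M *v axis (undefined::'n) 1)"] by simp
      then show False using one by linarith
    qed
    then show ?thesis using True x_def B_def by simp
  next
    case False
    then have "norm x > 0" by simp
    then show ?thesis using h x_def B_def by simp
  qed
qed

lemma transpose_add': "transpose (A + B) = transpose A + transpose (B::real^'n^'m)"
  by (simp add: transpose_def vec_eq_iff)

lemma transpose_diff': "transpose (A - B) = transpose A - transpose (B::real^'n^'m)"
  by (simp add: transpose_def vec_eq_iff)

theorem proposition4p2:
  fixes f :: "real^'n \<Rightarrow> real^'n"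
    and Df :: "real^'n \<Rightarrow> real^'n^'n"
    and q :: "real^'n \<Rightarrow> ereal"
    and xh dh dsh :: "real^'n"
    and G :: "real^'n^'n"
  assumes deriv: "\<forall>x. (f has_derivative (\<lambda>h. Df x *v h)) (at x)"
    and cont: "continuous_on UNIV Df"
    and q_proper: "proper_fun q" and q_convex: "convex_fun q" and q_lsc: "lsc_fun q"
    and gph: "dsh \<in> subdiff q dh"
    and G_sym: "transpose G = G"
    and G_psd: "\<forall>v. 0 \<le> v \<bullet> (G *v v)"
    and G_norm: "onorm (\<lambda>v. G *v v) \<le> 1"
    and G_cod: "\<forall>v. G *v v \<in> coderivative (subdiff q) dh dsh ((mat 1 - G) *v v)"
    and reg: "\<forall>s. 0 \<in> (\<lambda>u. transpose (Df xh) *v s + u) ` coderivative (subdiff q) dh dsh s \<longrightarrow> s = 0"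
  shows "invertible ((mat 1 - G) ** Df xh + G) \<and>
    ereal (onorm (\<lambda>v. matrix_inv ((mat 1 - G) ** Df xh + G) *v v))
      \<le> 1 + ereal (onorm (\<lambda>v. (Df xh - mat 1) *v v)) /
        (INF s\<in>{s. norm s = 1}. dist0 ((\<lambda>u. transpose (Df xh) *v s + u) ` coderivative (subdiff q) dh dsh s))"
proof -
  define A where "A = Df xh"
  define M where "M = (mat 1 - G) ** A + G"
  define T where "T = transpose M"
  define sv where "sv v = (mat 1 - G) *v v" for v
  define c where "c = onorm (\<lambda>v. (A - mat 1) *v v)"
  define D where "D s = coderivative (subdiff q) dh dsh s" for s
  define mu where "mu = (INF s\<in>{s. norm s = 1}. dist0 ((\<lambda>u. transpose A *v s + u) ` D s))"
  have T_eq: "T = transpose A ** (mat 1 - G) + G"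
    unfolding T_def M_def by (simp add: transpose_add' transpose_diff' matrix_transpose_mul G_sym)
  have Tv: "T *v v = transpose A *v sv v + G *v v" for v
    unfolding T_eq sv_def by (simp add: matrix_vector_mult_add_rdistrib matrix_vector_mul_assoc)
  have vdec: "v = sv v + G *v v" for v
    unfolding sv_def by (simp add: matrix_vector_mult_diff_rdistrib)
  have cbound: "norm ((A - mat 1) *v x) \<le> c * norm x" for x
    unfolding c_def by (rule onorm) simp
  have c0: "0 \<le> c" unfolding c_def by (rule onorm_pos_le) simp
  have ctb: "norm ((transpose A - mat 1) *v y) \<le> c * norm y" for y
    using transpose_bound[of "A - mat 1" c y, OF cbound] by (simp add: transpose_diff')
  have F1: "norm v \<le> norm (T *v v) + c * norm (sv v)" for v
  proof -
    have "v = T *v v - (transpose A - mat 1) *v sv v"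
      using vdec[of v] unfolding Tv by (simp add: matrix_vector_mult_diff_rdistrib) (metis add.commute)
    then have "norm v \<le> norm (T *v v) + norm ((transpose A - mat 1) *v sv v)"
      by (metis norm_triangle_ineq4)
    then show ?thesis using ctb[of "sv v"] by linarith
  qed
  have inD: "G *v v \<in> D (sv v)" for v
    using G_cod unfolding D_def sv_def by blast
  have F2: "mu \<le> ereal (norm (T *v v) / norm (sv v))" if "sv v \<noteq> 0" for v
  proof -
    define t where "t = 1 / norm (sv v)"
    have t0: "t > 0" using that unfolding t_def by simp
    have n1: "norm (t *\<^sub>R sv v) = 1" using that unfolding t_def by simp
    have "t *\<^sub>R (G *v v) \<in> D (t *\<^sub>R sv v)"
      using cod_scale[OF inD[of v, unfolded D_def] t0] unfolding D_def .
    moreover have "transpose A *v (t *\<^sub>R sv v) + t *\<^sub>R (G *v v) = t *\<^sub>R (T *v v)"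
      unfolding Tv by (simp add: matrix_vector_mult_scaleR scaleR_add_right)
    ultimately have mem: "t *\<^sub>R (T *v v) \<in> (\<lambda>u. transpose A *v (t *\<^sub>R sv v) + u) ` D (t *\<^sub>R sv v)"
      by (metis image_eqI)
    have "mu \<le> dist0 ((\<lambda>u. transpose A *v (t *\<^sub>R sv v) + u) ` D (t *\<^sub>R sv v))"
      unfolding mu_def using n1 by (intro INF_lower) simp
    also have "\<dots> \<le> ereal (norm (t *\<^sub>R (T *v v)))"
      unfolding dist0_def using mem by (rule INF_lower)
    also have "norm (t *\<^sub>R (T *v v)) = norm (T *v v) / norm (sv v)"
      using t0 unfolding t_def by simp
    finally show ?thesis .
  qed
  have Tinj: "T *v v = 0 \<Longrightarrow> v = 0" for v
  proof -
    assume h: "T *v v = 0"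
    have "0 \<in> (\<lambda>u. transpose A *v sv v + u) ` D (sv v)"
      using inD[of v] h unfolding Tv by (metis image_eqI)
    then have "sv v = 0" using reg unfolding D_def A_def by blast
    then show "v = 0" using F1[of v] h by simp
  qed
  have invT: "invertible T"
    using Tinj unfolding invertible_left_inverse matrix_left_invertible_ker by blast
  have invM: "invertible M"
    using transpose_invertible[OF invT] unfolding T_def by simp
  have mu0: "0 \<le> mu"
    unfolding mu_def dist0_def by (intro INF_greatest) simp
  have main: "ereal (onorm (\<lambda>y. matrix_inv M *v y)) \<le> 1 + ereal c / mu"
  proof -
    have K: "ereal (onorm (\<lambda>y. matrix_inv M *v y)) \<le> ereal K"
      if "\<And>v. norm v \<le> K * norm (T *v v)" for K
    proof -
      have "onorm (\<lambda>y. matrix_inv M *v y) \<le> K"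
        by (rule onorm_le) (rule inv_bound[OF invM], use that T_def in auto)
      then show ?thesis by simp
    qed
    show ?thesis
    proof (cases "c = 0")
      case True
      have "norm v \<le> 1 * norm (T *v v)" for v using F1[of v] True by simp
      then show ?thesis using K[of 1] True by (simp add: zero_ereal_def[symmetric])
    next
      case cpos: False
      then have cpos: "c > 0" using c0 by simp
      show ?thesis
      proof (cases mu)
        case (real r)
        show ?thesis
        proof (cases "r = 0")
          case True
          then have "ereal c / mu = \<infinity>" using real cpos by simp
          then show ?thesis by simp
        next
          case False
          then have r0: "r > 0" using mu0 real by simp
          have "norm v \<le> (1 + c / r) * norm (T *v v)" for v
          proof (cases "sv v = 0")
            case True
            have "0 \<le> c * norm (T *v v) / r" using r0 c0 by simp
            then show ?thesis using F1[of v] True by (simp add: algebra_simps)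
          next
            case False
            then have "r \<le> norm (T *v v) / norm (sv v)" using F2[of v] real by simp
            then have "r * norm (sv v) \<le> norm (T *v v)" using False by (simp add: field_simps)
            then have "norm (sv v) \<le> norm (T *v v) / r" using r0 by (simp add: field_simps)
            then have "c * norm (sv v) \<le> c * (norm (T *v v) / r)" using c0 by (rule mult_left_mono)
            then show ?thesis using F1[of v] by (simp add: algebra_simps)
          qed
          then have "ereal (onorm (\<lambda>y. matrix_inv M *v y)) \<le> ereal (1 + c / r)" by (rule K)
          then show ?thesis using real r0 by simp
        qed
      next
        case PInf
        have "norm v \<le> 1 * norm (T *v v)" for v
        proof (cases "sv v = 0")
          case True then show ?thesis using F1[of v] by simp
        next
          case False then show ?thesis using F2[of v] PInf by simp
        qed
        then show ?thesis using K[of 1] PInf by simp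
      next
        case MInf then show ?thesis using mu0 by simp
      qed
    qed
  qed
  show ?thesis
    using invM main unfolding M_def c_def mu_def D_def A_def by (rule conjI)
qed

end
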